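(* Let $\mu,\delta,\rho>0$ and $0<\beta_0<\mu$. For a parameter $b>0$ consider the system \[ \dot P=P\big[(b-\mu)-2bP+(\delta-b)A\big],\qquad \dot A=-(2\delta P+\rho)A \] on $\mathcal F=\{(P,A): P\ge0,\ A\ge0,\ 2P+A\le1\}$, with centrist share $C=1-2P-A$. Let $t_1<\dots<t_n$ be shock times with state components $\Delta_1,\dots,\Delta_n\in[0,1]$ and structural components $\Delta\beta_1,\dots,\Delta\beta_n\ge0$; at $t_k$ the state jumps by $P\mapsto P$, $C\mapsto(1-\Delta_k)C$, $A\mapsto A+\Delta_kC$, and the parameter becomes $B_k=\beta_0+\sum_{j=1}^k\Delta\beta_j$. Assume $P(t_k^+)>0$ for every $k$. Let $C_k^\infty$ denote $\lim_{t\to\infty}C(t)$ for the solution of the system with $b=B_k$ started from the post-shock state at $t_k^+$ (i.e. without further shocks), and let $k^*$ be the first index with $B_{k^*}>\mu$. Then: (i) For all $k<k^*$, $C_k^\infty=1$. If in addition $\delta>B_k$, then the near-centrist surge criterion for the $k$-th shock is $\Delta_k>\Delta_c^{(k)}:=\frac{\mu-B_k}{\delta-B_k}$, in the sense that $\lim_{\varepsilon\to0^+}(\dot P/P)$ at $(P,A)=(\varepsilon,\Delta_k)$ under $b=B_k$ is positive if and only if $\Delta_k>\Delta_c^{(k)}$. (ii) $C_{k^*}^\infty=\mu/B_{k^*}<1$. (iii) For every $k>k^*$, $C_k^\infty=\mu/B_k\le C_{k-1}^\infty$, with strict inequality if and only if $\Delta\beta_k>0$. (iv) $k^*=\min\{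k:\sum_{j=1}^k\Delta\beta_j>\mu-\beta_0\}$.
   Context: Symmetric reduction ($L=R=P$) of a four-group voter model with disengaged share $A$; $b$ is the combined recruitment/reactive-polarisation rate. *)

theory Defs
  imports "HOL-Analysis.Analysis"
begin

definition fP :: "real \<Rightarrow> real \<Rightarrow> real \<Rightarrow> real \<Rightarrow> real \<Rightarrow> real" where
  "fP mu delta b P A = P * ((b - mu) - 2 * b * P + (delta - b) * A)"

definition fA :: "real \<Rightarrow> real \<Rightarrow> real \<Rightarrow> real \<Rightarrow> real" where
  "fA delta rho P A = - (2 * delta * P + rho) * A"

definition in_F :: "real \<Rightarrow> real \<Rightarrow> bool" where
  "in_F P A \<longleftrightarrow> P \<ge> 0 \<and> A \<ge> 0 \<and> 2 * P + A \<le> 1"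

definition is_sol ::
  "real \<Rightarrow> real \<Rightarrow> real \<Rightarrow> real \<Rightarrow> real \<Rightarrow> real \<Rightarrow> real
     \<Rightarrow> (real \<Rightarrow> real) \<Rightarrow> (real \<Rightarrow> real) \<Rightarrow> bool" where
  "is_sol mu delta rho b t0 P0 A0 p a \<longleftrightarrow>
     p t0 = P0 \<and> a t0 = A0 \<and>
     (\<forall>t\<ge>t0. (p has_real_derivative fP mu delta b (p t) (a t)) (at t within {t0..}) \<and>
              (a has_real_derivative fA delta rho (p t) (a t)) (at t within {t0..}))"

definition Cinf_is ::
  "real \<Rightarrow> real \<Rightarrow> real \<Rightarrow> real \<Rightarrow> real \<Rightarrow> real \<Rightarrow> real \<Rightarrow> real \<Rightarrow> bool" where
  "Cinf_is mu delta rho b t0 P0 A0 L \<longleftrightarrow>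
     (\<exists>p a. is_sol mu delta rho b t0 P0 A0 p a) \<and>
     (\<forall>p a. is_sol mu delta rho b t0 P0 A0 p a \<longrightarrow>
        ((\<lambda>t. 1 - 2 * p t - a t) \<longlongrightarrow> L) at_top)"

end

theory Submission
  imports Defs
begin


lemma deriv_interior:
  fixes f :: "real \<Rightarrow> real"
  assumes "(f has_real_derivative d) (at t within {T..})" "t > T"
  shows "(f has_real_derivative d) (at t)"
proof -
  have "t \<in> interior {T..}" using assms(2) by simp
  then have "at t within {T..} = at t" by (rule at_within_interior)
  then show ?thesis using assms(1) by simp
qed

lemma deriv_cont:
  fixes f :: "real \<Rightarrow> real"
  assumes d: "\<And>t. t \<ge> T \<Longrightarrow> (f has_real_derivative f' t) (at t within {T..})"
  shows "continuous_on {T..} f"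
  unfolding continuous_on_eq_continuous_within
  using d DERIV_continuous by fastforce

lemma deriv_mono:
  fixes f :: "real \<Rightarrow> real"
  assumes d: "\<And>t. t \<ge> T \<Longrightarrow> (f has_real_derivative f' t) (at t within {T..})"
    and "T \<le> s" "s \<le> u" and nn: "\<And>t. s < t \<Longrightarrow> t < u \<Longrightarrow> f' t \<ge> 0"
  shows "f s \<le> f u"
proof (rule DERIV_nonneg_imp_increasing_open[OF \<open>s \<le> u\<close>])
  fix x assume "s < x" "x < u"
  then show "\<exists>y. DERIV f x :> y \<and> 0 \<le> y"
    using deriv_interior[OF d[of x]] nn[of x] \<open>T \<le> s\<close> by (intro exI[of _ "f' x"]) auto
next
  show "continuous_on {s..u} f"
    using deriv_cont[OF d] by (rule continuous_on_subset) (use \<open>T \<le> s\<close> in auto)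
qed

lemma barrier:
  fixes f f' :: "real \<Rightarrow> real"
  assumes d: "\<And>t. t \<ge> T \<Longrightarrow> (f has_real_derivative f' t) (at t within {T..})"
    and f0: "f T \<ge> 0" and nn: "\<And>t. t > T \<Longrightarrow> f t < 0 \<Longrightarrow> f' t \<ge> 0"
    and t: "t \<ge> T"
  shows "f t \<ge> 0"
proof (rule ccontr)
  assume "\<not> f t \<ge> 0" hence ft: "f t < 0" by simp
  have cont: "continuous_on {T..t} f"
    using deriv_cont[OF d] by (rule continuous_on_subset) auto
  define S where "S = {T..t} \<inter> f -` {0..}"
  have cS: "closed S" unfolding S_def
    by (rule continuous_closed_preimage[OF cont]) auto
  have TS: "T \<in> S" using f0 t by (auto simp: S_def)
  have bS: "bdd_above S" unfolding S_def by (auto intro: bdd_aboveI[of _ t])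
  define s where "s = Sup S"
  have sS: "s \<in> S" unfolding s_def using closed_contains_Sup[OF _ bS cS] TS by auto
  hence s1: "T \<le> s" "s \<le> t" "f s \<ge> 0" by (auto simp: S_def)
  have st: "s < t" using s1 ft by (cases "s = t") auto
  have neg: "f u < 0" if "s < u" "u \<le> t" for u
  proof (rule ccontr)
    assume "\<not> f u < 0"
    hence "u \<in> S" using that s1 by (auto simp: S_def)
    hence "u \<le> s" unfolding s_def using bS by (rule cSup_upper)
    with that show False by simp
  qed
  have "f s \<le> f t"
    by (rule deriv_mono[OF d s1(1) s1(2)]) (use neg nn s1 in auto)
  with s1 ft show False by simp
qed

lemma eventually_nonneg:
  fixes f f' :: "real \<Rightarrow> real"
  assumes d: "\<And>t. t \<ge> T \<Longrightarrow> (f has_real_derivative f' t) (at t within {T..})"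
    and r: "r > 0" and nn: "\<And>t. t \<ge> T \<Longrightarrow> f t < 0 \<Longrightarrow> f' t \<ge> r"
  shows "\<exists>T'\<ge>T. \<forall>t\<ge>T'. f t \<ge> 0"
proof -
  have "\<exists>T'\<ge>T. f T' \<ge> 0"
  proof (rule ccontr)
    assume "\<not> ?thesis"
    hence neg: "\<And>t. t \<ge> T \<Longrightarrow> f t < 0" by force
    define g where "g t = f t - r * t" for t
    have dg: "(g has_real_derivative f' t - r) (at t within {T..})" if "t \<ge> T" for t
      unfolding g_def using d[OF that] by (auto intro!: derivative_eq_intros)
    define t1 where "t1 = T + (- f T) / r + 1"
    have t1: "T \<le> t1" using neg[of T] r by (simp add: t1_def)
    have "g T \<le> g t1"
      proof (rule deriv_mono[OF dg order.refl t1])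
      fix u assume "T < u" "u < t1"
      then show "0 \<le> f' u - r" using nn[of u] neg[of u] by simp
    qed
    hence "f t1 \<ge> f T + r * (t1 - T)" by (simp add: g_def algebra_simps)
    also have "r * (t1 - T) = - f T + r" using r by (simp add: t1_def field_simps)
    finally have "f t1 \<ge> r" by simp
    with neg[OF t1] r show False by simp
  qed
  then obtain T' where T': "T' \<ge> T" "f T' \<ge> 0" by blast
  have "\<forall>t\<ge>T'. f t \<ge> 0"
  proof (intro allI impI)
    fix t assume "t \<ge> T'"
    show "f t \<ge> 0"
    proof (rule barrier[of T' f f'])
      fix u assume "u \<ge> T'"
      show "(f has_real_derivative f' u) (at u within {T'..})"
        using d[of u] \<open>u \<ge> T'\<close> T' by (auto intro: DERIV_subset)
    next
      fix u assume "u > T'" "f u < 0"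
      then show "f' u \<ge> 0" using nn[of u] T' r by auto
    qed (use T' \<open>t \<ge> T'\<close> in auto)
  qed
  with T' show ?thesis by blast
qed

lemma lin_ode:
  fixes y h :: "real \<Rightarrow> real"
  assumes d: "\<And>t. t \<ge> t0 \<Longrightarrow> (y has_real_derivative h t * y t) (at t within {t0..})"
    and hc: "continuous_on {t0..} h" and t: "t \<ge> t0"
  shows "y t = y t0 * exp (integral {t0..t} h)"
proof -
  define H where "H u = integral {t0..u} h" for u
  have hc': "continuous_on {t0..t} h" using hc by (rule continuous_on_subset) auto
  have dH: "(H has_real_derivative h u) (at u within {t0..t})" if "u \<in> {t0..t}" for u
    unfolding H_def by (rule integral_has_real_derivative[OF hc' that])
  define g where "g u = y u * exp (- H u)" for u
  have dg: "(g has_real_derivative 0) (at u within {t0..t})" if "u \<in> {t0..t}" for u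
  proof -
    have dy: "(y has_real_derivative h u * y u) (at u within {t0..t})"
      using d[of u] that by (auto intro: DERIV_subset)
    have "(g has_real_derivative (h u * y u) * exp (- H u) + y u * (exp (- H u) * (- h u))) (at u within {t0..t})"
      unfolding g_def by (rule derivative_eq_intros dy dH[OF that] refl)+ simp
    then show ?thesis by (simp add: algebra_simps)
  qed
  obtain c where c: "\<forall>u\<in>{t0..t}. g u = c"
    using has_field_derivative_zero_constant[of "{t0..t}" g] dg by auto
  have "g t = g t0" using c t by auto
  moreover have "H t0 = 0" by (simp add: H_def)
  ultimately have "y t * exp (- H t) = y t0" by (simp add: g_def)
  then have "y t = y t0 * exp (H t)" by (simp add: exp_minus field_simps)
  then show ?thesis by (simp add: H_def)
qed



lemma int_pow:
  fixes t0 t c :: real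
  assumes "t0 \<le> t"
  shows "integral {t0..t} (\<lambda>s. c * (s - t0) ^ k) = c * (t - t0) ^ Suc k / real (Suc k)"
    and "(\<lambda>s. c * (s - t0) ^ k) integrable_on {t0..t}"
proof -
  have key: "c / r * (r * z * 1) = c * z" if "r \<noteq> 0" for r z :: real using that by simp
  have "((\<lambda>s. c * (s - t0) ^ k) has_integral
     (c / real (Suc k) * (t - t0) ^ Suc k - c / real (Suc k) * (t0 - t0) ^ Suc k)) {t0..t}"
  proof (rule fundamental_theorem_of_calculus[OF assms])
    fix x assume "x \<in> {t0..t}"
    have "((\<lambda>s. c / real (Suc k) * (s - t0) ^ Suc k) has_real_derivative
        c / real (Suc k) * (real (Suc k) * (x - t0) ^ k * 1)) (at x within {t0..t})"
      by (rule derivative_eq_intros refl)+ simp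
    then show "((\<lambda>s. c / real (Suc k) * (s - t0) ^ Suc k) has_vector_derivative c * (x - t0) ^ k)
        (at x within {t0..t})"
      using key[of "real (Suc k)" "(x - t0) ^ k"] by (simp only: has_real_derivative_iff_has_vector_derivative[symmetric])
  qed
  then have I: "((\<lambda>s. c * (s - t0) ^ k) has_integral c * (t - t0) ^ Suc k / real (Suc k)) {t0..t}"
    by simp
  from I show "integral {t0..t} (\<lambda>s. c * (s - t0) ^ k) = c * (t - t0) ^ Suc k / real (Suc k)"
    by (rule integral_unique)
  from I show "(\<lambda>s. c * (s - t0) ^ k) integrable_on {t0..t}" by blast
qed

lemma indef_int_cont:
  fixes g :: "real \<Rightarrow> 'a::banach"
  assumes "continuous_on {t0..T} g"
  shows "continuous_on {t0..T} (\<lambda>u. integral {t0..u} g)"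
  unfolding continuous_on_eq_continuous_within
proof
  fix x assume "x \<in> {t0..T}"
  from integral_has_vector_derivative[OF assms this]
  show "continuous (at x within {t0..T}) (\<lambda>u. integral {t0..u} g)"
    by (rule has_vector_derivative_continuous)
qed

lemma picard:
  fixes G :: "'a::banach \<Rightarrow> 'a"
  assumes L: "\<And>x y. norm (G x - G y) \<le> L * norm (x - y)" and L0: "L \<ge> 0"
    and M: "\<And>x. norm (G x) \<le> M"
    and Gc: "continuous_on UNIV G"
  shows "\<exists>y. y t0 = x0 \<and> (\<forall>t\<ge>t0. (y has_vector_derivative G (y t)) (at t within {t0..}))"
proof -
  have M0: "M \<ge> 0" using M[of 0] norm_ge_zero[of "G 0"] by linarith
  define X where "X = rec_nat (\<lambda>t. x0) (\<lambda>n xn t. x0 + integral {t0..t} (\<lambda>s. G (xn s)))"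
  have X0: "X 0 = (\<lambda>t. x0)" by (simp add: X_def)
  have XS: "X (Suc n) = (\<lambda>t. x0 + integral {t0..t} (\<lambda>s. G (X n s)))" for n
    by (simp add: X_def)
  have contX: "continuous_on {t0..T} (X n)" for n T
  proof (induction n)
    case 0 show ?case by (simp add: X0)
  next
    case (Suc n)
    have "continuous_on {t0..T} (\<lambda>s. G (X n s))"
      by (rule continuous_on_compose2[OF Gc Suc]) auto
    then show ?case unfolding XS by (intro continuous_intros indef_int_cont)
  qed
  have contG: "continuous_on {t0..T} (\<lambda>s. G (X n s))" for n T
    by (rule continuous_on_compose2[OF Gc contX]) auto
  have intG: "(\<lambda>s. G (X n s)) integrable_on {t0..T}" for n T
    by (rule integrable_continuous_interval[OF contG])
  have bound: "norm (X (Suc n) t - X n t) \<le> M * L ^ n * (t - t0) ^ Suc n / fact (Suc n)"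
    if "t \<ge> t0" for n t
    using that
  proof (induction n arbitrary: t)
    case 0
    have "norm (X (Suc 0) t - X 0 t) = norm (integral {t0..t} (\<lambda>s. G x0))"
      by (simp add: XS X0)
    also have "\<dots> \<le> integral {t0..t} (\<lambda>s. M)"
      by (rule integral_norm_bound_integral) (auto simp: M)
    also have "\<dots> = M * (t - t0)" using 0 by simp
    finally show ?case by simp
  next
    case (Suc n)
    have "X (Suc (Suc n)) t - X (Suc n) t
        = integral {t0..t} (\<lambda>s. G (X (Suc n) s) - G (X n s))"
    proof -
      have a: "X (Suc (Suc n)) t = x0 + integral {t0..t} (\<lambda>s. G (X (Suc n) s))"
        by (simp only: XS[of "Suc n"])
      have b: "X (Suc n) t = x0 + integral {t0..t} (\<lambda>s. G (X n s))"
        by (simp only: XS[of n])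
      show ?thesis unfolding a b
        by (simp add: Henstock_Kurzweil_Integration.integral_diff[OF intG intG])
    qed
    then have "norm (X (Suc (Suc n)) t - X (Suc n) t)
        = norm (integral {t0..t} (\<lambda>s. G (X (Suc n) s) - G (X n s)))" by simp
    also have "\<dots> \<le> integral {t0..t} (\<lambda>s. (L * (M * L ^ n / fact (Suc n))) * (s - t0) ^ Suc n)"
    proof (rule integral_norm_bound_integral)
      show "(\<lambda>s. G (X (Suc n) s) - G (X n s)) integrable_on {t0..t}"
        by (intro integrable_diff intG)
      show "(\<lambda>s. (L * (M * L ^ n / fact (Suc n))) * (s - t0) ^ Suc n) integrable_on {t0..t}"
        using int_pow(2) Suc.prems by blast
      fix s assume s: "s \<in> {t0..t}"
      have "norm (G (X (Suc n) s) - G (X n s)) \<le> L * norm (X (Suc n) s - X n s)" by (rule L)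
      also have "\<dots> \<le> L * (M * L ^ n * (s - t0) ^ Suc n / fact (Suc n))"
        using Suc.IH[of s] s L0 by (intro mult_left_mono) auto
      finally show "norm (G (X (Suc n) s) - G (X n s)) \<le> (L * (M * L ^ n / fact (Suc n))) * (s - t0) ^ Suc n"
        by simp
    qed
    also have "\<dots> = (L * (M * L ^ n / fact (Suc n))) * (t - t0) ^ Suc (Suc n) / real (Suc (Suc n))"
      using int_pow(1) Suc.prems by blast
    also have "\<dots> = M * L ^ Suc n * (t - t0) ^ Suc (Suc n) / fact (Suc (Suc n))"
      by (simp add: field_simps)
    finally show ?case .
  qed
  define y where "y t = x0 + (\<Sum>i. X (Suc i) t - X i t)" for t
  have unif: "uniform_limit {t0..T} X y sequentially" if "T \<ge> t0" for T
  proof -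
    define Mn where "Mn i = M * (T - t0) * (inverse (fact i) * (L * (T - t0)) ^ i)" for i
    have sM: "summable Mn" unfolding Mn_def by (intro summable_mult summable_exp)
    have bd: "norm (X (Suc i) x - X i x) \<le> Mn i" if "x \<in> {t0..T}" for i x
    proof -
      have "norm (X (Suc i) x - X i x) \<le> M * L ^ i * (x - t0) ^ Suc i / fact (Suc i)"
        using bound that by auto
      also have "\<dots> \<le> M * L ^ i * (T - t0) ^ Suc i / fact (Suc i)"
        using that M0 L0 by (intro divide_right_mono mult_left_mono power_mono) auto
      also have "\<dots> \<le> M * L ^ i * (T - t0) ^ Suc i / fact i"
        using that M0 L0 by (intro divide_left_mono) (auto simp: fact_mono)
      also have "\<dots> = Mn i" unfolding Mn_def by (simp only: power_mult_distrib power_Suc divide_inverse mult_ac)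
      finally show ?thesis .
    qed
    have U: "uniform_limit {t0..T} (\<lambda>n x. \<Sum>i<n. X (Suc i) x - X i x) (\<lambda>x. \<Sum>i. X (Suc i) x - X i x) sequentially"
      by (rule Weierstrass_m_test[OF bd sM])
    have tel: "(\<Sum>i<n. X (Suc i) x - X i x) = X n x - x0" for n x
      using sum_lessThan_telescope[of "\<lambda>i. X i x" n] by (simp add: X0)
    show ?thesis
      unfolding uniform_limit_iff
    proof (intro allI impI)
      fix e :: real assume e: "e > 0"
      from U[unfolded uniform_limit_iff, rule_format, OF e]
      show "\<forall>\<^sub>F n in sequentially. \<forall>x\<in>{t0..T}. dist (X n x) (y x) < e"
        by eventually_elim (simp add: tel y_def dist_norm algebra_simps)
    qed
  qed
  have contY: "continuous_on {t0..T} y" if "T \<ge> t0" for T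
    by (rule uniform_limit_theorem[OF _ unif[OF that]]) (auto simp: contX)
  have inteq: "y t = x0 + integral {t0..t} (\<lambda>s. G (y s))" if t: "t \<ge> t0" for t
  proof -
    have U: "uniform_limit {t0..t} X y sequentially" using unif[OF t] .
    have l1: "(\<lambda>n. X n t) \<longlonglongrightarrow> y t"
      using tendsto_uniform_limitI[OF U, of t] t by simp
    hence l1': "(\<lambda>n. X (Suc n) t) \<longlonglongrightarrow> y t" by (rule LIMSEQ_Suc)
    have cGy: "continuous_on {t0..t} (\<lambda>s. G (y s))"
      by (rule continuous_on_compose2[OF Gc contY[OF t]]) auto
    have l2: "(\<lambda>n. integral {t0..t} (\<lambda>s. G (X n s))) \<longlonglongrightarrow> integral {t0..t} (\<lambda>s. G (y s))"
    proof (rule tendstoI)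
      fix e :: real assume e: "e > 0"
      define e' where "e' = e / (2 * (L * (t - t0) + 1))"
      have den: "L * (t - t0) + 1 > 0" using L0 t by (simp add: add_nonneg_pos)
      have e': "e' > 0" using e den by (simp add: e'_def)
      from U[unfolded uniform_limit_iff, rule_format, OF e']
      show "\<forall>\<^sub>F n in sequentially. dist (integral {t0..t} (\<lambda>s. G (X n s))) (integral {t0..t} (\<lambda>s. G (y s))) < e"
      proof eventually_elim
        case (elim n)
        have "dist (integral {t0..t} (\<lambda>s. G (X n s))) (integral {t0..t} (\<lambda>s. G (y s)))
            = norm (integral {t0..t} (\<lambda>s. G (X n s) - G (y s)))"
          by (simp add: dist_norm Henstock_Kurzweil_Integration.integral_diff[OF intG integrable_continuous_interval[OF cGy]])
        also have "\<dots> \<le> integral {t0..t} (\<lambda>s. L * e')"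
        proof (rule integral_norm_bound_integral)
          show "(\<lambda>s. G (X n s) - G (y s)) integrable_on {t0..t}"
            by (intro integrable_diff intG integrable_continuous_interval[OF cGy])
          fix s assume s: "s \<in> {t0..t}"
          have "norm (G (X n s) - G (y s)) \<le> L * norm (X n s - y s)" by (rule L)
          also have "\<dots> \<le> L * e'"
          proof -
            have "norm (X n s - y s) < e'" using elim s by (auto simp: dist_norm)
            then show ?thesis using L0 by (intro mult_left_mono) auto
          qed
          finally show "norm (G (X n s) - G (y s)) \<le> L * e'" .
        qed auto
        also have "\<dots> = L * (t - t0) * e'" using t by simp
        also have "\<dots> \<le> (L * (t - t0) + 1) * e'" using e' by (intro mult_right_mono) auto
        also have "\<dots> = e / 2"
        proof -
          have gen: "d * (e / (2 * d)) = e / 2" if "d \<noteq> 0" for d :: real using that by (simp add: field_simps)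
          show ?thesis unfolding e'_def using den by (intro gen) simp
        qed
        also have "\<dots> < e" using e by simp
        finally show ?case .
      qed
    qed
    have "(\<lambda>n. X (Suc n) t) \<longlonglongrightarrow> x0 + integral {t0..t} (\<lambda>s. G (y s))"
      unfolding XS by (intro tendsto_intros l2)
    with l1' show ?thesis by (rule LIMSEQ_unique)
  qed
  have "y t0 = x0" using inteq[of t0] by simp
  moreover have "(y has_vector_derivative G (y t)) (at t within {t0..})" if t: "t \<ge> t0" for t
  proof -
    define T where "T = t + 1"
    have T: "T \<ge> t0" "t \<in> {t0..T}" using t by (auto simp: T_def)
    have cGy: "continuous_on {t0..T} (\<lambda>s. G (y s))"
      by (rule continuous_on_compose2[OF Gc contY[OF T(1)]]) auto
    have D: "((\<lambda>u. x0 + integral {t0..u} (\<lambda>s. G (y s))) has_vector_derivative G (y t)) (at t within {t0..T})"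
      using has_vector_derivative_add[OF has_vector_derivative_const integral_has_vector_derivative[OF cGy T(2)]] by simp
    have "(y has_vector_derivative G (y t)) (at t within {t0..T})"
    proof (rule has_vector_derivative_transform[OF T(2) _ D])
      fix u assume "u \<in> {t0..T}"
      then show "y u = x0 + integral {t0..u} (\<lambda>s. G (y s))" by (intro inteq) auto
    qed
    moreover have "at t within {t0..T} = at t within {t0..}"
      by (rule at_within_nhd[of _ "{..<T}"]) (auto simp: T_def)
    ultimately show ?thesis by simp
  qed
  ultimately show ?thesis by blast
qed



definition clamp :: "real \<Rightarrow> real" where "clamp x = max 0 (min 1 x)"

lemma clamp_bounds: "0 \<le> clamp x" "clamp x \<le> 1" by (auto simp: clamp_def)
lemma clamp_lip: "\<bar>clamp x - clamp y\<bar> \<le> \<bar>x - y\<bar>" by (auto simp: clamp_def)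
lemma clamp_id: "0 \<le> x \<Longrightarrow> x \<le> 1 \<Longrightarrow> clamp x = x" by (auto simp: clamp_def)
lemma clamp_neg: "x \<le> 0 \<Longrightarrow> clamp x = 0" by (auto simp: clamp_def)

lemma prod_lip:
  fixes p1 a1 p2 a2 :: real
  assumes "0 \<le> a1" "a1 \<le> 1" "0 \<le> p2" "p2 \<le> 1"
  shows "\<bar>p1 * a1 - p2 * a2\<bar> \<le> \<bar>p1 - p2\<bar> + \<bar>a1 - a2\<bar>"
proof -
  have "p1 * a1 - p2 * a2 = a1 * (p1 - p2) + p2 * (a1 - a2)" by (simp add: algebra_simps)
  then have "\<bar>p1 * a1 - p2 * a2\<bar> \<le> \<bar>a1\<bar> * \<bar>p1 - p2\<bar> + \<bar>p2\<bar> * \<bar>a1 - a2\<bar>"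
    by (metis abs_mult abs_triangle_ineq)
  also have "\<dots> \<le> 1 * \<bar>p1 - p2\<bar> + 1 * \<bar>a1 - a2\<bar>"
    using assms by (intro add_mono mult_right_mono) auto
  finally show ?thesis by simp
qed

lemma sq_lip:
  fixes p1 p2 :: real
  assumes "0 \<le> p1" "p1 \<le> 1" "0 \<le> p2" "p2 \<le> 1"
  shows "\<bar>p1 * p1 - p2 * p2\<bar> \<le> 2 * \<bar>p1 - p2\<bar>"
proof -
  have "p1 * p1 - p2 * p2 = (p1 + p2) * (p1 - p2)" by (simp add: algebra_simps)
  then have "\<bar>p1 * p1 - p2 * p2\<bar> = \<bar>p1 + p2\<bar> * \<bar>p1 - p2\<bar>" by (simp add: abs_mult)
  also have "\<dots> \<le> 2 * \<bar>p1 - p2\<bar>" using assms by (intro mult_right_mono) auto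
  finally show ?thesis .
qed

lemma abs3: "\<bar>x + y + z\<bar> \<le> \<bar>x\<bar> + \<bar>y\<bar> + \<bar>z::real\<bar>" by arith

lemma fP_lip:
  assumes "0 \<le> P1" "P1 \<le> 1" "0 \<le> P2" "P2 \<le> 1" "0 \<le> A1" "A1 \<le> 1" "0 \<le> A2" "A2 \<le> 1"
  shows "\<bar>fP mu delta b P1 A1 - fP mu delta b P2 A2\<bar>
     \<le> (\<bar>b - mu\<bar> + 2 * \<bar>b\<bar> * 2 + \<bar>delta - b\<bar>) * (\<bar>P1 - P2\<bar> + \<bar>A1 - A2\<bar>)"
proof -
  have e: "fP mu delta b P1 A1 - fP mu delta b P2 A2
     = (b - mu) * (P1 - P2) + (- 2 * b) * (P1 * P1 - P2 * P2) + (delta - b) * (P1 * A1 - P2 * A2)"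
    by (simp add: fP_def algebra_simps)
  have "\<bar>fP mu delta b P1 A1 - fP mu delta b P2 A2\<bar>
     \<le> \<bar>b - mu\<bar> * \<bar>P1 - P2\<bar> + 2 * \<bar>b\<bar> * \<bar>P1 * P1 - P2 * P2\<bar> + \<bar>delta - b\<bar> * \<bar>P1 * A1 - P2 * A2\<bar>"
    unfolding e using abs3[of "(b - mu) * (P1 - P2)" "(- 2 * b) * (P1 * P1 - P2 * P2)" "(delta - b) * (P1 * A1 - P2 * A2)"]
    by (simp add: abs_mult)
  also have "\<dots> \<le> \<bar>b - mu\<bar> * (\<bar>P1 - P2\<bar> + \<bar>A1 - A2\<bar>) + 2 * \<bar>b\<bar> * (2 * (\<bar>P1 - P2\<bar> + \<bar>A1 - A2\<bar>))
        + \<bar>delta - b\<bar> * (\<bar>P1 - P2\<bar> + \<bar>A1 - A2\<bar>)"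
  proof -
    have sq2: "\<bar>P1 * P1 - P2 * P2\<bar> \<le> 2 * (\<bar>P1 - P2\<bar> + \<bar>A1 - A2\<bar>)"
    proof -
      have h: "x \<le> 2 * y \<Longrightarrow> 0 \<le> z \<Longrightarrow> x \<le> 2 * (y + z)" for x y z :: real by (simp add: algebra_simps)
      show ?thesis by (rule h[OF sq_lip[of P1 P2, OF assms(1-4)] abs_ge_zero])
    qed
    show ?thesis
      using sq2 prod_lip[of A1 P2 P1 A2] assms
      by (intro add_mono mult_left_mono) auto
  qed
  finally show ?thesis by (simp add: algebra_simps)
qed

lemma fA_lip:
  assumes "0 \<le> P1" "P1 \<le> 1" "0 \<le> P2" "P2 \<le> 1" "0 \<le> A1" "A1 \<le> 1" "0 \<le> A2" "A2 \<le> 1"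
  shows "\<bar>fA delta rho P1 A1 - fA delta rho P2 A2\<bar>
     \<le> (2 * \<bar>delta\<bar> + \<bar>rho\<bar>) * (\<bar>P1 - P2\<bar> + \<bar>A1 - A2\<bar>)"
proof -
  have e: "fA delta rho P1 A1 - fA delta rho P2 A2 = (- 2 * delta) * (P1 * A1 - P2 * A2) + (- rho) * (A1 - A2)"
    by (simp add: fA_def algebra_simps)
  have "\<bar>fA delta rho P1 A1 - fA delta rho P2 A2\<bar> \<le> 2 * \<bar>delta\<bar> * \<bar>P1 * A1 - P2 * A2\<bar> + \<bar>rho\<bar> * \<bar>A1 - A2\<bar>"
    unfolding e using abs_triangle_ineq[of "(- 2 * delta) * (P1 * A1 - P2 * A2)" "(- rho) * (A1 - A2)"]
    by (simp add: abs_mult)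
  also have "\<dots> \<le> 2 * \<bar>delta\<bar> * (\<bar>P1 - P2\<bar> + \<bar>A1 - A2\<bar>) + \<bar>rho\<bar> * (\<bar>P1 - P2\<bar> + \<bar>A1 - A2\<bar>)"
    using prod_lip[of A1 P2 P1 A2] assms by (intro add_mono mult_left_mono) auto
  finally show ?thesis by (simp add: algebra_simps)
qed



definition Gf :: "real \<Rightarrow> real \<Rightarrow> real \<Rightarrow> real \<Rightarrow> real \<times> real \<Rightarrow> real \<times> real" where
  "Gf mu delta rho b z = (fP mu delta b (clamp (fst z)) (clamp (snd z)), fA delta rho (clamp (fst z)) (clamp (snd z)))"

lemma Gf_cont: "continuous_on UNIV (Gf mu delta rho b)"
  unfolding Gf_def fP_def fA_def clamp_def by (intro continuous_intros)

lemma Gf_lip: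
  "norm (Gf mu delta rho b z1 - Gf mu delta rho b z2)
    \<le> (2 * ((\<bar>b - mu\<bar> + 2 * \<bar>b\<bar> * 2 + \<bar>delta - b\<bar>) + (2 * \<bar>delta\<bar> + \<bar>rho\<bar>))) * norm (z1 - z2)"
proof -
  obtain p1 a1 where z1: "z1 = (p1, a1)" by (cases z1)
  obtain p2 a2 where z2: "z2 = (p2, a2)" by (cases z2)
  define K1 where "K1 = \<bar>b - mu\<bar> + 2 * \<bar>b\<bar> * 2 + \<bar>delta - b\<bar>"
  define K2 where "K2 = 2 * \<bar>delta\<bar> + \<bar>rho\<bar>"
  have K: "K1 \<ge> 0" "K2 \<ge> 0" by (auto simp: K1_def K2_def)
  have n: "\<bar>p1 - p2\<bar> \<le> norm (z1 - z2)" "\<bar>a1 - a2\<bar> \<le> norm (z1 - z2)"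
    using norm_fst_le[of "p1 - p2" "a1 - a2"] norm_snd_le[of "a1 - a2" "p1 - p2"]
    by (auto simp: z1 z2)
  have s: "\<bar>clamp p1 - clamp p2\<bar> + \<bar>clamp a1 - clamp a2\<bar> \<le> 2 * norm (z1 - z2)"
    using clamp_lip[of p1 p2] clamp_lip[of a1 a2] n by linarith
  have d1: "\<bar>fP mu delta b (clamp p1) (clamp a1) - fP mu delta b (clamp p2) (clamp a2)\<bar> \<le> K1 * (2 * norm (z1 - z2))"
  proof -
    have "\<bar>fP mu delta b (clamp p1) (clamp a1) - fP mu delta b (clamp p2) (clamp a2)\<bar>
       \<le> K1 * (\<bar>clamp p1 - clamp p2\<bar> + \<bar>clamp a1 - clamp a2\<bar>)"
      unfolding K1_def by (rule fP_lip) (simp_all add: clamp_bounds)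
    then show ?thesis using mult_left_mono[OF s K(1)] by linarith
  qed
  have d2: "\<bar>fA delta rho (clamp p1) (clamp a1) - fA delta rho (clamp p2) (clamp a2)\<bar> \<le> K2 * (2 * norm (z1 - z2))"
  proof -
    have "\<bar>fA delta rho (clamp p1) (clamp a1) - fA delta rho (clamp p2) (clamp a2)\<bar>
       \<le> K2 * (\<bar>clamp p1 - clamp p2\<bar> + \<bar>clamp a1 - clamp a2\<bar>)"
      unfolding K2_def by (rule fA_lip) (simp_all add: clamp_bounds)
    then show ?thesis using mult_left_mono[OF s K(2)] by linarith
  qed
  have "norm (Gf mu delta rho b z1 - Gf mu delta rho b z2)
     \<le> \<bar>fP mu delta b (clamp p1) (clamp a1) - fP mu delta b (clamp p2) (clamp a2)\<bar>
       + \<bar>fA delta rho (clamp p1) (clamp a1) - fA delta rho (clamp p2) (clamp a2)\<bar>"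
    using norm_Pair_le[of "fP mu delta b (clamp p1) (clamp a1) - fP mu delta b (clamp p2) (clamp a2)"
       "fA delta rho (clamp p1) (clamp a1) - fA delta rho (clamp p2) (clamp a2)"]
    by (simp add: Gf_def z1 z2)
  also have "\<dots> \<le> K1 * (2 * norm (z1 - z2)) + K2 * (2 * norm (z1 - z2))" using d1 d2 by linarith
  finally show ?thesis by (simp add: K1_def K2_def algebra_simps)
qed

lemma fP_bound: "0 \<le> P \<Longrightarrow> P \<le> 1 \<Longrightarrow> 0 \<le> A \<Longrightarrow> A \<le> 1 \<Longrightarrow>
  \<bar>fP mu delta b P A\<bar> \<le> \<bar>b - mu\<bar> + 2 * \<bar>b\<bar> + \<bar>delta - b\<bar>"
proof -
  assume a: "0 \<le> P" "P \<le> 1" "0 \<le> A" "A \<le> 1"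
  have "\<bar>(b - mu) - 2 * b * P + (delta - b) * A\<bar> \<le> \<bar>b - mu\<bar> + \<bar>2 * b * P\<bar> + \<bar>(delta - b) * A\<bar>"
    by arith
  also have "\<dots> \<le> \<bar>b - mu\<bar> + 2 * \<bar>b\<bar> + \<bar>delta - b\<bar>"
    using a by (intro add_mono) (auto simp: abs_mult intro: mult_le_one mult_left_le)
  finally have h: "\<bar>(b - mu) - 2 * b * P + (delta - b) * A\<bar> \<le> \<bar>b - mu\<bar> + 2 * \<bar>b\<bar> + \<bar>delta - b\<bar>" .
  have "\<bar>fP mu delta b P A\<bar> = \<bar>P\<bar> * \<bar>(b - mu) - 2 * b * P + (delta - b) * A\<bar>"
    by (simp add: fP_def abs_mult)
  also have "\<dots> \<le> 1 * (\<bar>b - mu\<bar> + 2 * \<bar>b\<bar> + \<bar>delta - b\<bar>)"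
    using a h by (intro mult_mono) auto
  finally show ?thesis by simp
qed

lemma fA_bound: "0 \<le> P \<Longrightarrow> P \<le> 1 \<Longrightarrow> 0 \<le> A \<Longrightarrow> A \<le> 1 \<Longrightarrow>
  \<bar>fA delta rho P A\<bar> \<le> 2 * \<bar>delta\<bar> + \<bar>rho\<bar>"
proof -
  assume a: "0 \<le> P" "P \<le> 1" "0 \<le> A" "A \<le> 1"
  have "fA delta rho P A = - ((2 * delta * P + rho) * A)" by (simp add: fA_def algebra_simps)
  then have "\<bar>fA delta rho P A\<bar> = \<bar>2 * delta * P + rho\<bar> * \<bar>A\<bar>" by (simp only: abs_minus_cancel abs_mult)
  also have "\<dots> \<le> (2 * \<bar>delta\<bar> + \<bar>rho\<bar>) * 1"
  proof (intro mult_mono)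
    have "\<bar>2 * delta * P + rho\<bar> \<le> \<bar>2 * delta * P\<bar> + \<bar>rho\<bar>" by (rule abs_triangle_ineq)
    also have "\<bar>2 * delta * P\<bar> \<le> 2 * \<bar>delta\<bar>" using a by (auto simp: abs_mult intro: mult_left_le)
    finally show "\<bar>2 * delta * P + rho\<bar> \<le> 2 * \<bar>delta\<bar> + \<bar>rho\<bar>" by simp
  qed (use a in auto)
  finally show ?thesis by simp
qed

lemma Gf_bound: "norm (Gf mu delta rho b z) \<le> (\<bar>b - mu\<bar> + 2 * \<bar>b\<bar> + \<bar>delta - b\<bar>) + (2 * \<bar>delta\<bar> + \<bar>rho\<bar>)"
proof -
  have "norm (Gf mu delta rho b z) \<le> \<bar>fP mu delta b (clamp (fst z)) (clamp (snd z))\<bar> + \<bar>fA delta rho (clamp (fst z)) (clamp (snd z))\<bar>"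
    using norm_Pair_le[of "fP mu delta b (clamp (fst z)) (clamp (snd z))" "fA delta rho (clamp (fst z)) (clamp (snd z))"]
    by (simp add: Gf_def)
  also have "\<dots> \<le> (\<bar>b - mu\<bar> + 2 * \<bar>b\<bar> + \<bar>delta - b\<bar>) + (2 * \<bar>delta\<bar> + \<bar>rho\<bar>)"
    using clamp_bounds by (intro add_mono fP_bound fA_bound) auto
  finally show ?thesis .
qed

lemma vd_fst:
  assumes "(z has_vector_derivative (u, v)) F"
  shows "((\<lambda>t. fst (z t)) has_real_derivative u) F"
  unfolding has_field_derivative_def
  by (rule has_derivative_eq_rhs[OF has_derivative_fst[OF assms[unfolded has_vector_derivative_def]]])
    (auto simp: fun_eq_iff)

lemma vd_snd:
  assumes "(z has_vector_derivative (u, v)) F"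
  shows "((\<lambda>t. snd (z t)) has_real_derivative v) F"
  unfolding has_field_derivative_def
  by (rule has_derivative_eq_rhs[OF has_derivative_snd[OF assms[unfolded has_vector_derivative_def]]])
    (auto simp: fun_eq_iff)



lemma C_deriv_identity:
  "- 2 * fP mu delta b P A - fA delta rho P A = 2 * P * (mu - b * (1 - 2 * P - A)) + rho * A"
  by (simp add: fP_def fA_def algebra_simps)

lemma C_deriv_nonneg:
  assumes "0 \<le> P" "0 \<le> A" "1 - 2 * P - A \<le> 0" "mu > 0" "b > 0" "rho > 0"
  shows "- 2 * fP mu delta b P A - fA delta rho P A \<ge> 0"
proof -
  have "b * (1 - 2 * P - A) \<le> 0" using assms by (simp add: mult_nonneg_nonpos)
  then have "mu - b * (1 - 2 * P - A) \<ge> 0" using assms by linarith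
  then show ?thesis unfolding C_deriv_identity using assms by simp
qed

lemma exists_sol:
  assumes pos: "mu > 0" "delta > 0" "rho > 0" "b > 0" and F: "in_F P0 A0"
  shows "\<exists>p a. is_sol mu delta rho b t0 P0 A0 p a"
proof -
  obtain z where z0: "z t0 = (P0, A0)"
    and dz: "\<forall>t\<ge>t0. (z has_vector_derivative Gf mu delta rho b (z t)) (at t within {t0..})"
    using picard[of "Gf mu delta rho b" _ _ t0 "(P0, A0)", OF Gf_lip _ Gf_bound Gf_cont] by auto
  define p where "p = (\<lambda>t. fst (z t))"
  define a where "a = (\<lambda>t. snd (z t))"
  define gP where "gP t = fP mu delta b (clamp (p t)) (clamp (a t))" for t
  define gA where "gA t = fA delta rho (clamp (p t)) (clamp (a t))" for t
  have zt: "z t = (p t, a t)" for t by (simp add: p_def a_def)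
  have dzt: "(z has_vector_derivative (gP t, gA t)) (at t within {t0..})" if "t \<ge> t0" for t
    using dz that by (simp add: Gf_def gP_def gA_def p_def a_def)
  have dp: "(p has_real_derivative gP t) (at t within {t0..})" if "t \<ge> t0" for t
    unfolding p_def using vd_fst[OF dzt[OF that]] .
  have da: "(a has_real_derivative gA t) (at t within {t0..})" if "t \<ge> t0" for t
    unfolding a_def using vd_snd[OF dzt[OF that]] .
  have p0: "p t0 = P0" and a0: "a t0 = A0" using z0 by (auto simp: p_def a_def)
  have pnn: "p t \<ge> 0" if "t \<ge> t0" for t
  proof (rule barrier[of t0 p gP, OF dp _ _ that])
    show "0 \<le> p t0" using p0 F by (simp add: in_F_def)
    fix u assume "p u < 0"
    then show "gP u \<ge> 0" by (simp add: gP_def clamp_neg fP_def)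
  qed auto
  have ann: "a t \<ge> 0" if "t \<ge> t0" for t
  proof (rule barrier[of t0 a gA, OF da _ _ that])
    show "0 \<le> a t0" using a0 F by (simp add: in_F_def)
    fix u assume "a u < 0"
    then show "gA u \<ge> 0" by (simp add: gA_def clamp_neg fA_def)
  qed auto
  have ale: "a t \<le> 1" if "t \<ge> t0" for t
  proof -
    have "0 \<le> 1 - a t"
    proof (rule barrier[of t0 "\<lambda>t. 1 - a t" "\<lambda>t. - gA t", OF _ _ _ that])
      fix u assume "u \<ge> t0"
      show "((\<lambda>t. 1 - a t) has_real_derivative - gA u) (at u within {t0..})"
        using da[OF \<open>u \<ge> t0\<close>] by (auto intro!: derivative_eq_intros)
    next
      show "0 \<le> 1 - a t0" using a0 F by (simp add: in_F_def)
    next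
      fix u
      have "0 \<le> (2 * delta * clamp (p u) + rho) * clamp (a u)"
        using pos clamp_bounds by (intro mult_nonneg_nonneg add_nonneg_nonneg) auto
      moreover have "- gA u = (2 * delta * clamp (p u) + rho) * clamp (a u)"
        by (simp add: gA_def fA_def algebra_simps)
      ultimately show "0 \<le> - gA u" by simp
    qed
    then show ?thesis by simp
  qed
  have Cnn: "1 - 2 * p t - a t \<ge> 0" if "t \<ge> t0" for t
  proof (rule barrier[of t0 "\<lambda>t. 1 - 2 * p t - a t" "\<lambda>t. - 2 * gP t - gA t", OF _ _ _ that])
    fix u assume "u \<ge> t0"
    show "((\<lambda>t. 1 - 2 * p t - a t) has_real_derivative - 2 * gP u - gA u) (at u within {t0..})"
      using dp[OF \<open>u \<ge> t0\<close>] da[OF \<open>u \<ge> t0\<close>] by (auto intro!: derivative_eq_intros)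
  next
    show "0 \<le> 1 - 2 * p t0 - a t0" using a0 p0 F by (simp add: in_F_def)
  next
    fix u assume u: "u > t0" "1 - 2 * p u - a u < 0"
    have ca: "clamp (a u) = a u" using ann[of u] ale[of u] u by (intro clamp_id) auto
    have "1 - 2 * clamp (p u) - clamp (a u) \<le> 0"
    proof (cases "p u \<le> 1")
      case True
      then have "clamp (p u) = p u" using pnn[of u] u by (intro clamp_id) auto
      then show ?thesis using u ca by simp
    next
      case False
      then have "clamp (p u) = 1" by (simp add: clamp_def)
      then show ?thesis using ann[of u] u ca by simp
    qed
    then show "0 \<le> - 2 * gP u - gA u" unfolding gP_def gA_def
      using C_deriv_nonneg[of "clamp (p u)" "clamp (a u)" mu b rho delta] clamp_bounds pos by simp
  qed
  have cp: "clamp (p t) = p t" and ca: "clamp (a t) = a t" if "t \<ge> t0" for t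
    using pnn[OF that] ann[OF that] ale[OF that] Cnn[OF that] by (auto intro!: clamp_id)
  have "is_sol mu delta rho b t0 P0 A0 p a"
    unfolding is_sol_def
    using p0 a0 dp da cp ca by (auto simp: gP_def gA_def)
  then show ?thesis by blast
qed



lemma sol_basic:
  assumes S: "is_sol mu delta rho b t0 P0 A0 p a"
  shows "p t0 = P0" "a t0 = A0"
    "\<And>t. t \<ge> t0 \<Longrightarrow> (p has_real_derivative fP mu delta b (p t) (a t)) (at t within {t0..})"
    "\<And>t. t \<ge> t0 \<Longrightarrow> (a has_real_derivative fA delta rho (p t) (a t)) (at t within {t0..})"
  using S by (auto simp: is_sol_def)

lemma sol_inv:
  assumes pos: "mu > 0" "delta > 0" "rho > 0" "b > 0" and F: "in_F P0 A0" and P0: "P0 > 0"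
    and S: "is_sol mu delta rho b t0 P0 A0 p a" and t: "t \<ge> t0"
  shows "p t > 0 \<and> a t \<ge> 0 \<and> 1 - 2 * p t - a t \<ge> 0"
proof -
  note sb = sol_basic[OF S]
  have cp: "continuous_on {t0..} p" by (rule deriv_cont[OF sb(3)])
  have ca: "continuous_on {t0..} a" by (rule deriv_cont[OF sb(4)])
  define h where "h t = (b - mu) - 2 * b * p t + (delta - b) * a t" for t
  have hc: "continuous_on {t0..} h" unfolding h_def using cp ca by (intro continuous_intros)
  have ppos: "p u > 0" if "u \<ge> t0" for u
  proof -
    have "p u = p t0 * exp (integral {t0..u} h)"
    proof (rule lin_ode[OF _ hc that])
      fix s assume "s \<ge> t0"
      then show "(p has_real_derivative h s * p s) (at s within {t0..})"
        using sb(3)[of s] by (simp add: fP_def h_def mult.commute)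
    qed
    then show ?thesis using sb(1) P0 by simp
  qed
  have ann: "a u \<ge> 0" if "u \<ge> t0" for u
  proof (rule barrier[of t0 a "\<lambda>s. fA delta rho (p s) (a s)", OF sb(4) _ _ that])
    show "0 \<le> a t0" using sb(2) F by (simp add: in_F_def)
    fix s assume "s > t0" "a s < 0"
    moreover have "2 * delta * p s + rho > 0" using ppos[of s] \<open>s > t0\<close> pos by (simp add: add_nonneg_pos)
    ultimately show "0 \<le> fA delta rho (p s) (a s)" by (simp add: fA_def mult_nonpos_nonpos)
  qed auto
  have Cnn: "1 - 2 * p u - a u \<ge> 0" if "u \<ge> t0" for u
  proof (rule barrier[of t0 "\<lambda>t. 1 - 2 * p t - a t" "\<lambda>s. - 2 * fP mu delta b (p s) (a s) - fA delta rho (p s) (a s)", OF _ _ _ that])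
    fix s assume "s \<ge> t0"
    show "((\<lambda>t. 1 - 2 * p t - a t) has_real_derivative - 2 * fP mu delta b (p s) (a s) - fA delta rho (p s) (a s)) (at s within {t0..})"
      using sb(3)[OF \<open>s \<ge> t0\<close>] sb(4)[OF \<open>s \<ge> t0\<close>] by (auto intro!: derivative_eq_intros)
  next
    show "0 \<le> 1 - 2 * p t0 - a t0" using sb F by (simp add: in_F_def)
  next
    fix s assume s: "s > t0" "1 - 2 * p s - a s < 0"
    then show "0 \<le> - 2 * fP mu delta b (p s) (a s) - fA delta rho (p s) (a s)"
      using C_deriv_nonneg[of "p s" "a s" mu b rho delta] ppos[of s] ann[of s] pos by simp
  qed
  show ?thesis using ppos[OF t] ann[OF t] Cnn[OF t] by blast
qed

lemma sol_a_small:
  assumes pos: "mu > 0" "delta > 0" "rho > 0" "b > 0" and F: "in_F P0 A0" and P0: "P0 > 0"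
    and S: "is_sol mu delta rho b t0 P0 A0 p a" and eta: "eta > 0"
  shows "\<exists>T\<ge>t0. \<forall>t\<ge>T. a t \<le> eta"
proof -
  note sb = sol_basic[OF S]
  note inv = sol_inv[OF pos F P0 S]
  have "\<exists>T'\<ge>t0. \<forall>t\<ge>T'. eta - a t \<ge> 0"
  proof (rule eventually_nonneg[of t0 "\<lambda>t. eta - a t" "\<lambda>s. - fA delta rho (p s) (a s)" "rho * eta"])
    fix s assume "s \<ge> t0"
    show "((\<lambda>t. eta - a t) has_real_derivative - fA delta rho (p s) (a s)) (at s within {t0..})"
      using sb(4)[OF \<open>s \<ge> t0\<close>] by (auto intro!: derivative_eq_intros)
  next
    show "rho * eta > 0" using pos eta by simp
  next
    fix s assume s: "s \<ge> t0" "eta - a s < 0"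
    have "- fA delta rho (p s) (a s) = 2 * delta * p s * a s + rho * a s"
      by (simp add: fA_def algebra_simps)
    moreover have "2 * delta * p s * a s \<ge> 0" using inv[OF s(1)] pos by simp
    moreover have "rho * a s \<ge> rho * eta" using s pos by simp
    ultimately show "- fA delta rho (p s) (a s) \<ge> rho * eta" by linarith
  qed
  then show ?thesis by auto
qed

lemma sol_dln:
  assumes pos: "mu > 0" "delta > 0" "rho > 0" "b > 0" and F: "in_F P0 A0" and P0: "P0 > 0"
    and S: "is_sol mu delta rho b t0 P0 A0 p a" and T: "T \<ge> t0" and s: "s \<ge> T"
  shows "((\<lambda>t. ln (p t)) has_real_derivative ((b - mu) - 2 * b * p s + (delta - b) * a s)) (at s within {T..})"
proof -
  note sb = sol_basic[OF S]
  have ps: "p s > 0" using sol_inv[OF pos F P0 S, of s] T s by simp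
  have d: "(p has_real_derivative fP mu delta b (p s) (a s)) (at s within {T..})"
    using sb(3)[of s] T s by (auto intro: DERIV_subset)
  have "((\<lambda>t. ln (p t)) has_real_derivative fP mu delta b (p s) (a s) / p s) (at s within {T..})"
    by (rule derivative_eq_intros d refl | use ps in simp)+
  moreover have "fP mu delta b (p s) (a s) / p s = (b - mu) - 2 * b * p s + (delta - b) * a s"
    using ps by (simp add: fP_def)
  ultimately show ?thesis by simp
qed



lemma sol_da_small:
  assumes pos: "mu > 0" "delta > 0" "rho > 0" "b > 0" and F: "in_F P0 A0" and P0: "P0 > 0"
    and S: "is_sol mu delta rho b t0 P0 A0 p a" and eta: "eta > 0"
  shows "\<exists>T\<ge>t0. \<forall>t\<ge>T. (delta - b) * a t \<le> b * eta \<and> - ((delta - b) * a t) \<le> b * eta"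
proof -
  define K where "K = \<bar>delta - b\<bar> + 1"
  have K: "K > 0" "\<bar>delta - b\<bar> \<le> K" by (auto simp: K_def)
  obtain T where T: "T \<ge> t0" "\<forall>t\<ge>T. a t \<le> b * eta / K"
    using sol_a_small[OF pos F P0 S, of "b * eta / K"] eta pos K by auto
  have "(delta - b) * a t \<le> b * eta \<and> - ((delta - b) * a t) \<le> b * eta" if t: "t \<ge> T" for t
  proof -
    have at: "a t \<ge> 0" using sol_inv[OF pos F P0 S, of t] T t by simp
    have "\<bar>(delta - b) * a t\<bar> = \<bar>delta - b\<bar> * a t" using at by (simp add: abs_mult)
    also have "\<dots> \<le> K * a t" using K at by (intro mult_right_mono) auto
    also have "\<dots> \<le> K * (b * eta / K)" using T t K by (intro mult_left_mono) auto
    also have "\<dots> = b * eta" using K by simp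
    finally show ?thesis by linarith
  qed
  with T show ?thesis by blast
qed

lemma sol_up:
  assumes pos: "mu > 0" "delta > 0" "rho > 0" "b > 0" and F: "in_F P0 A0" and P0: "P0 > 0"
    and S: "is_sol mu delta rho b t0 P0 A0 p a" and eta: "eta > 0" and c: "c > 0"
    and cond: "(mu - b) + 2 * b * c \<ge> 2 * b * eta"
  shows "\<exists>T. \<forall>t\<ge>T. p t \<le> c"
proof -
  obtain T1 where T1: "T1 \<ge> t0" "\<forall>t\<ge>T1. (delta - b) * a t \<le> b * eta \<and> - ((delta - b) * a t) \<le> b * eta"
    using sol_da_small[OF pos F P0 S eta] by blast
  define h where "h s = (b - mu) - 2 * b * p s + (delta - b) * a s" for s
  have "\<exists>T'\<ge>T1. \<forall>t\<ge>T'. ln c - ln (p t) \<ge> 0"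
  proof (rule eventually_nonneg[of T1 "\<lambda>t. ln c - ln (p t)" "\<lambda>s. - h s" "b * eta"])
    fix s assume "s \<ge> T1"
    show "((\<lambda>t. ln c - ln (p t)) has_real_derivative - h s) (at s within {T1..})"
      using DERIV_diff[OF DERIV_const[of "ln c"] sol_dln[OF pos F P0 S T1(1) \<open>s \<ge> T1\<close>]]
      by (simp add: h_def)
  next
    show "b * eta > 0" using pos eta by simp
  next
    fix s assume s: "s \<ge> T1" "ln c - ln (p s) < 0"
    have ps: "p s > 0" using sol_inv[OF pos F P0 S, of s] T1 s by simp
    have "c < p s" using s ps c by simp
    then have "2 * b * c \<le> 2 * b * p s" using pos by simp
    moreover have "(delta - b) * a s \<le> b * eta" using T1 s by blast
    ultimately show "- h s \<ge> b * eta" unfolding h_def using cond by linarith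
  qed
  then obtain T' where T': "T' \<ge> T1" "\<forall>t\<ge>T'. ln c - ln (p t) \<ge> 0" by blast
  have "p t \<le> c" if "t \<ge> T'" for t
  proof -
    have ps: "p t > 0" using sol_inv[OF pos F P0 S, of t] T1 T' that by simp
    have "ln (p t) \<le> ln c" using T' that by auto
    then show ?thesis using ps c by simp
  qed
  then show ?thesis by blast
qed

lemma sol_low:
  assumes pos: "mu > 0" "delta > 0" "rho > 0" "b > 0" and F: "in_F P0 A0" and P0: "P0 > 0"
    and S: "is_sol mu delta rho b t0 P0 A0 p a" and eta: "eta > 0" and c: "c > 0"
    and cond: "(b - mu) - 2 * b * c \<ge> 2 * b * eta"
  shows "\<exists>T. \<forall>t\<ge>T. p t \<ge> c"
proof -
  obtain T1 where T1: "T1 \<ge> t0" "\<forall>t\<ge>T1. (delta - b) * a t \<le> b * eta \<and> - ((delta - b) * a t) \<le> b * eta"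
    using sol_da_small[OF pos F P0 S eta] by blast
  define h where "h s = (b - mu) - 2 * b * p s + (delta - b) * a s" for s
  have "\<exists>T'\<ge>T1. \<forall>t\<ge>T'. ln (p t) - ln c \<ge> 0"
  proof (rule eventually_nonneg[of T1 "\<lambda>t. ln (p t) - ln c" "\<lambda>s. h s" "b * eta"])
    fix s assume "s \<ge> T1"
    show "((\<lambda>t. ln (p t) - ln c) has_real_derivative h s) (at s within {T1..})"
      using DERIV_diff[OF sol_dln[OF pos F P0 S T1(1) \<open>s \<ge> T1\<close>] DERIV_const[of "ln c"]]
      by (simp add: h_def)
  next
    show "b * eta > 0" using pos eta by simp
  next
    fix s assume s: "s \<ge> T1" "ln (p s) - ln c < 0"
    have ps: "p s > 0" using sol_inv[OF pos F P0 S, of s] T1 s by simp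
    have "p s < c" using s ps c by simp
    then have "2 * b * p s \<le> 2 * b * c" using pos by simp
    moreover have "- ((delta - b) * a s) \<le> b * eta" using T1 s by blast
    ultimately show "h s \<ge> b * eta" unfolding h_def using cond by linarith
  qed
  then obtain T' where T': "T' \<ge> T1" "\<forall>t\<ge>T'. ln (p t) - ln c \<ge> 0" by blast
  have "p t \<ge> c" if "t \<ge> T'" for t
  proof -
    have ps: "p t > 0" using sol_inv[OF pos F P0 S, of t] T1 T' that by simp
    have "ln c \<le> ln (p t)" using T' that by auto
    then show ?thesis using ps c by simp
  qed
  then show ?thesis by blast
qed

lemma sol_limit:
  assumes pos: "mu > 0" "delta > 0" "rho > 0" "b > 0" and F: "in_F P0 A0" and P0: "P0 > 0"
    and S: "is_sol mu delta rho b t0 P0 A0 p a"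
  shows "((\<lambda>t. 1 - 2 * p t - a t) \<longlongrightarrow> (if b \<le> mu then 1 else mu / b)) at_top"
proof (rule tendstoI)
  fix e :: real assume e: "e > 0"
  note inv = sol_inv[OF pos F P0 S]
  show "\<forall>\<^sub>F t in at_top. dist (1 - 2 * p t - a t) (if b \<le> mu then 1 else mu / b) < e"
  proof (cases "b \<le> mu")
    case True
    define eta where "eta = e / 4"
    have eta: "eta > 0" using e by (simp add: eta_def)
    obtain T1 where T1: "\<forall>t\<ge>T1. p t \<le> eta"
      using sol_up[OF pos F P0 S eta eta] True pos by auto
    obtain T2 where T2: "T2 \<ge> t0" "\<forall>t\<ge>T2. a t \<le> eta"
      using sol_a_small[OF pos F P0 S eta] by blast
    have "dist (1 - 2 * p t - a t) (if b \<le> mu then 1 else mu / b) < e" if t: "t \<ge> max T1 T2" for t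
    proof -
      have i: "p t > 0" "a t \<ge> 0" using inv[of t] t T2 by auto
      have "dist (1 - 2 * p t - a t) 1 = 2 * p t + a t" using i by (simp add: dist_real_def)
      also have "\<dots> \<le> 3 * eta" using T1 T2 t by force
      also have "\<dots> < e" using e by (simp add: eta_def)
      finally show ?thesis using True by simp
    qed
    then show ?thesis unfolding eventually_at_top_linorder by blast
  next
    case False
    define Ps where "Ps = (b - mu) / (2 * b)"
    have Ps: "Ps > 0" using False pos by (simp add: Ps_def)
    have Ps2: "2 * b * Ps = b - mu" using pos by (simp add: Ps_def)
    have Pmu: "1 - mu / b = 2 * Ps" using pos by (simp add: Ps_def field_simps)
    define eta where "eta = min (e / 4) (Ps / 2)"
    have eta: "eta > 0" "eta \<le> e / 4" "eta \<le> Ps / 2" using e Ps by (auto simp: eta_def)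
    obtain T1 where T1: "\<forall>t\<ge>T1. p t \<le> Ps + eta"
      using sol_up[OF pos F P0 S eta(1), of "Ps + eta"] Ps eta Ps2 pos by (auto simp: algebra_simps)
    obtain T3 where T3: "\<forall>t\<ge>T3. p t \<ge> Ps - eta"
      using sol_low[OF pos F P0 S eta(1), of "Ps - eta"] Ps eta Ps2 pos by (auto simp: algebra_simps)
    obtain T2 where T2: "T2 \<ge> t0" "\<forall>t\<ge>T2. a t \<le> eta"
      using sol_a_small[OF pos F P0 S eta(1)] by blast
    have "dist (1 - 2 * p t - a t) (if b \<le> mu then 1 else mu / b) < e" if t: "t \<ge> max T1 (max T2 T3)" for t
    proof -
      have i: "a t \<ge> 0" using inv[of t] t T2 by auto
      have u: "p t \<le> Ps + eta" "p t \<ge> Ps - eta" "a t \<le> eta" using T1 T2 T3 t by auto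
      have "1 - 2 * p t - a t - mu / b = 2 * (Ps - p t) - a t" using Pmu by simp
      then have "dist (1 - 2 * p t - a t) (mu / b) = \<bar>2 * (Ps - p t) - a t\<bar>" by (simp add: dist_real_def)
      also have "\<dots> \<le> 3 * eta" using u i by (simp add: abs_le_iff)
      also have "\<dots> < e" using e eta by linarith
      finally show ?thesis using False by simp
    qed
    then show ?thesis unfolding eventually_at_top_linorder by blast
  qed
qed

lemma Cinf_core:
  assumes pos: "mu > 0" "delta > 0" "rho > 0" "b > 0" and F: "in_F P0 A0" and P0: "P0 > 0"
  shows "Cinf_is mu delta rho b t0 P0 A0 (if b \<le> mu then 1 else mu / b)"
  unfolding Cinf_is_def using exists_sol[OF pos F] sol_limit[OF pos F P0] by blast



theorem theorem7p12:
  fixes mu delta rho beta0 :: real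
    and n :: nat
    and t :: "nat \<Rightarrow> real"
    and D dbeta :: "nat \<Rightarrow> real"
    and Pm Am :: "nat \<Rightarrow> real"
  assumes pos: "mu > 0" "delta > 0" "rho > 0"
    and beta0: "0 < beta0" "beta0 < mu"
    and times: "\<And>k. 1 \<le> k \<Longrightarrow> k < n \<Longrightarrow> t k < t (Suc k)"
    and D: "\<And>k. k \<in> {1..n} \<Longrightarrow> 0 \<le> D k \<and> D k \<le> 1"
    and dbeta: "\<And>k. k \<in> {1..n} \<Longrightarrow> dbeta k \<ge> 0"
    and preF: "\<And>k. k \<in> {1..n} \<Longrightarrow> in_F (Pm k) (Am k)"
    and Ppos: "\<And>k. k \<in> {1..n} \<Longrightarrow> Pm k > 0"
  shows
    "let B = (\<lambda>k. beta0 + (\<Sum>j=1..k. dbeta j));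
         Ap = (\<lambda>k. Am k + D k * (1 - 2 * Pm k - Am k))
     in
      (\<forall>k\<in>{1..n}. (\<forall>j\<in>{1..k}. B j \<le> mu) \<longrightarrow>
          Cinf_is mu delta rho (B k) (t k) (Pm k) (Ap k) 1 \<and>
          (delta > B k \<longrightarrow>
             (\<exists>L. ((\<lambda>eps. fP mu delta (B k) eps (D k) / eps) \<longlongrightarrow> L) (at_right 0) \<and>
                  (L > 0 \<longleftrightarrow> D k > (mu - B k) / (delta - B k))))) \<and>
      (\<forall>ks. ks \<in> {1..n} \<and> B ks > mu \<and> (\<forall>j\<in>{1..<ks}. B j \<le> mu) \<longrightarrow>
          (Cinf_is mu delta rho (B ks) (t ks) (Pm ks) (Ap ks) (mu / B ks) \<and> mu / B ks < 1) \<and>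
          (\<forall>k\<in>{1..n}. k > ks \<longrightarrow>
              Cinf_is mu delta rho (B k) (t k) (Pm k) (Ap k) (mu / B k) \<and>
              mu / B k \<le> mu / B (k - 1) \<and>
              (mu / B k < mu / B (k - 1) \<longleftrightarrow> dbeta k > 0)) \<and>
          ks = (LEAST k. (\<Sum>j=1..k. dbeta j) > mu - beta0))"
proof -
  define B where "B = (\<lambda>k. beta0 + (\<Sum>j=1..k. dbeta j))"
  define Ap where "Ap = (\<lambda>k. Am k + D k * (1 - 2 * Pm k - Am k))"
  have Bmono: "B i \<le> B j" if "i \<le> j" "j \<le> n" for i j
  proof -
    have "(\<Sum>x=1..i. dbeta x) \<le> (\<Sum>x=1..j. dbeta x)"
      using that dbeta by (intro sum_mono2) auto
    then show ?thesis by (simp add: B_def)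
  qed
  have Bge: "B k \<ge> beta0" if "k \<le> n" for k
    using Bmono[of 0 k] that by (simp add: B_def)
  have Bpos: "B k > 0" if "k \<le> n" for k using Bge[OF that] beta0 by linarith
  have Bstep: "B k = B (k - 1) + dbeta k" if k1: "k \<ge> 1" for k
  proof -
    obtain m where m: "k = Suc m" using k1 by (cases k) auto
    show ?thesis by (simp add: B_def m)
  qed
  have ApF: "in_F (Pm k) (Ap k)" if k: "k \<in> {1..n}" for k
  proof -
    have "0 \<le> D k" "D k \<le> 1" using D[OF k] by auto
    moreover have "Pm k \<ge> 0" "Am k \<ge> 0" "2 * Pm k + Am k \<le> 1" using preF[OF k] by (auto simp: in_F_def)
    moreover have "D k * (1 - 2 * Pm k - Am k) \<le> 1 * (1 - 2 * Pm k - Am k)"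
      using calculation by (intro mult_right_mono) auto
    ultimately show ?thesis unfolding in_F_def Ap_def by (auto intro: mult_nonneg_nonneg)
  qed
  have core: "Cinf_is mu delta rho (B k) (t k) (Pm k) (Ap k) (if B k \<le> mu then 1 else mu / B k)"
    if k: "k \<in> {1..n}" for k
    using Cinf_core[OF pos Bpos ApF[OF k] Ppos[OF k]] k by auto
  have part1: "\<forall>k\<in>{1..n}. (\<forall>j\<in>{1..k}. B j \<le> mu) \<longrightarrow>
          Cinf_is mu delta rho (B k) (t k) (Pm k) (Ap k) 1 \<and>
          (delta > B k \<longrightarrow>
             (\<exists>L. ((\<lambda>eps. fP mu delta (B k) eps (D k) / eps) \<longlongrightarrow> L) (at_right 0) \<and>
                  (L > 0 \<longleftrightarrow> D k > (mu - B k) / (delta - B k))))"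
  proof (intro ballI impI conjI)
    fix k assume k: "k \<in> {1..n}" and le: "\<forall>j\<in>{1..k}. B j \<le> mu"
    have Bk: "B k \<le> mu" using le k by auto
    show "Cinf_is mu delta rho (B k) (t k) (Pm k) (Ap k) 1" using core[OF k] Bk by simp
    assume dB: "delta > B k"
    define L where "L = (B k - mu) + (delta - B k) * D k"
    have lim: "((\<lambda>eps. fP mu delta (B k) eps (D k) / eps) \<longlongrightarrow> L) (at_right 0)"
    proof -
      have "((\<lambda>eps. (B k - mu) - 2 * B k * eps + (delta - B k) * D k) \<longlongrightarrow>
              (B k - mu) - 2 * B k * 0 + (delta - B k) * D k) (at_right 0)"
        by (intro tendsto_intros)
      then have l: "((\<lambda>eps. (B k - mu) - 2 * B k * eps + (delta - B k) * D k) \<longlongrightarrow> L) (at_right 0)"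
        by (simp add: L_def)
      have ev: "\<forall>\<^sub>F eps in at_right (0::real). (B k - mu) - 2 * B k * eps + (delta - B k) * D k
                 = fP mu delta (B k) eps (D k) / eps"
        using eventually_at_right_less[of 0] by eventually_elim (simp add: fP_def)
      show ?thesis by (rule Lim_transform_eventually[OF l ev])
    qed
    have "L > 0 \<longleftrightarrow> D k > (mu - B k) / (delta - B k)"
    proof -
      have "D k > (mu - B k) / (delta - B k) \<longleftrightarrow> mu - B k < D k * (delta - B k)"
        using dB by (simp add: pos_divide_less_eq)
      then show ?thesis by (auto simp: L_def algebra_simps)
    qed
    with lim show "\<exists>L. ((\<lambda>eps. fP mu delta (B k) eps (D k) / eps) \<longlongrightarrow> L) (at_right 0) \<and>
                  (L > 0 \<longleftrightarrow> D k > (mu - B k) / (delta - B k))" by blast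
  qed
  have part2: "\<forall>ks. ks \<in> {1..n} \<and> B ks > mu \<and> (\<forall>j\<in>{1..<ks}. B j \<le> mu) \<longrightarrow>
          (Cinf_is mu delta rho (B ks) (t ks) (Pm ks) (Ap ks) (mu / B ks) \<and> mu / B ks < 1) \<and>
          (\<forall>k\<in>{1..n}. k > ks \<longrightarrow>
              Cinf_is mu delta rho (B k) (t k) (Pm k) (Ap k) (mu / B k) \<and>
              mu / B k \<le> mu / B (k - 1) \<and>
              (mu / B k < mu / B (k - 1) \<longleftrightarrow> dbeta k > 0)) \<and>
          ks = (LEAST k. (\<Sum>j=1..k. dbeta j) > mu - beta0)"
  proof (intro allI impI conjI)
    fix ks assume H: "ks \<in> {1..n} \<and> B ks > mu \<and> (\<forall>j\<in>{1..<ks}. B j \<le> mu)"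
    then have ks: "ks \<in> {1..n}" and Bks: "B ks > mu" and below: "\<forall>j\<in>{1..<ks}. B j \<le> mu" by auto
    show "Cinf_is mu delta rho (B ks) (t ks) (Pm ks) (Ap ks) (mu / B ks)"
      using core[OF ks] Bks by simp
    show "mu / B ks < 1" using Bks pos by simp
    show "\<forall>k\<in>{1..n}. k > ks \<longrightarrow>
              Cinf_is mu delta rho (B k) (t k) (Pm k) (Ap k) (mu / B k) \<and>
              mu / B k \<le> mu / B (k - 1) \<and>
              (mu / B k < mu / B (k - 1) \<longleftrightarrow> dbeta k > 0)"
    proof (intro ballI impI conjI)
      fix k assume k: "k \<in> {1..n}" and gt: "k > ks"
      have "B ks \<le> B (k - 1)" using gt k by (intro Bmono) auto
      then have B1: "B (k - 1) > mu" using Bks by linarith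
      have st: "B k = B (k - 1) + dbeta k" using Bstep k by auto
      have dk: "dbeta k \<ge> 0" using dbeta k by auto
      have Bk: "B k > mu" using B1 st dk by linarith
      show "Cinf_is mu delta rho (B k) (t k) (Pm k) (Ap k) (mu / B k)" using core[OF k] Bk by simp
      have p1: "B (k - 1) > 0" using B1 pos by linarith
      show "mu / B k \<le> mu / B (k - 1)"
        using st dk p1 pos by (intro divide_left_mono) auto
      have "mu / B k < mu / B (k - 1) \<longleftrightarrow> B (k - 1) < B k"
      proof -
        have gen: "x > 0 \<Longrightarrow> y > 0 \<Longrightarrow> (mu / x < mu / y) = (y < x)" for x y :: real
          using pos(1) by (simp add: field_simps)
        show ?thesis using p1 Bk pos by (intro gen) auto
      qed
      then show "mu / B k < mu / B (k - 1) \<longleftrightarrow> dbeta k > 0" using st by simp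
    qed
    show "ks = (LEAST k. (\<Sum>j=1..k. dbeta j) > mu - beta0)"
    proof (rule Least_equality[symmetric])
      show "(\<Sum>j=1..ks. dbeta j) > mu - beta0" using Bks by (simp add: B_def)
    next
      fix k assume Pk: "(\<Sum>j=1..k. dbeta j) > mu - beta0"
      show "ks \<le> k"
      proof (rule ccontr)
        assume "\<not> ks \<le> k"
        then have kl: "k < ks" by simp
        show False
        proof (cases "k = 0")
          case True
          then show False using Pk beta0 by simp
        next
          case False
          then have "k \<in> {1..<ks}" using kl by auto
          then have "B k \<le> mu" using below by blast
          then show False using Pk by (simp add: B_def)
        qed
      qed
    qed
  qed
  show ?thesis unfolding Let_def using part1 part2 unfolding B_def Ap_def by simp
qed


end
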